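(* Let $M$ be an $n\times n$ non-singular, aperiodic, odd-block matrix with nonnegative integer entries, and let $h$ be any piecewise-linear map realizing $M$. Then there exists an aperiodic odd-block matrix $N$ with entries only in $\{0,1\}$ such that $h$ is a piecewise-linear map realizing $N$ (i.e. $h_N=h_M=h$), and the leading eigenvalue of $N$ equals the leading eigenvalue of $M$.
   Context: An $m\times m$ nonnegative integer matrix $A$ is odd-block if (i) in each column of $A$ the non-zero entries form one consecutive block, and (ii) there is a map $\phi:\{0,1,\dots,m\}\to\{0,1,\dots,m\}$ such that $A_{ij}$ is odd if and only if $\min\{\phi(j-1),\phi(j)\}<i\le\max\{\phi(j-1),\phi(j)\}$. A nonnegative matrix is aperiodic if some power of it has all entries positive. For an aperiodic nonnegative integer $m\times m$ matrix $A$ with leading (Perron) eigenvalue $\lambda$, let $v$ be the positive eigenvector of $A^T$ for $\lambda$ normalized to have $L^1$-norm $1$, set $x_0=0$ and $x_i=x_{i-1}+v_i$ (so $x_m=1$), and $I_i=[x_{i-1},x_i]$. A piecewise-linear map realizing $A$ (denoted $h_A$) is a continuous map $h:[0,1]\to[0,1]$ such that for each $j$ there is a subdivision $x_{j-1}=a_0<a_1<\dots<a_r=x_j$ with $h$ affine of slope $\pm\lambda$ on each $[a_{k-1},a_k]$ and mapping it onto some interval $I_i$, and for every $i$ the number of $k$ with $h([a_{k-1},a_k])=I_i$ equals $A_{ij}$. Such a map need not be unique when $A$ has entries larger than $1$. *)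

theory Defs
  imports Complex_Main "Jordan_Normal_Form.Spectral_Radius" "Jordan_Normal_Form.Determinant"
begin

text \<open>Square matrices of varying size m are represented as functions
  nat => nat => nat (nonnegative integer entries), with rows/columns indexed by 1..m;
  entries outside this range are irrelevant.\<close>

definition to_mat :: "nat \<Rightarrow> (nat \<Rightarrow> nat \<Rightarrow> 'a::semiring_1) \<Rightarrow> 'a mat" where
  "to_mat m A = mat m m (\<lambda>(i,j). A (Suc i) (Suc j))"

definition nat_to_real :: "(nat \<Rightarrow> nat \<Rightarrow> nat) \<Rightarrow> nat \<Rightarrow> nat \<Rightarrow> real" where
  "nat_to_real A = (\<lambda>i j. real (A i j))"

definition nonsingular :: "nat \<Rightarrow> (nat \<Rightarrow> nat \<Rightarrow> nat) \<Rightarrow> bool" where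
  "nonsingular m A \<longleftrightarrow> det (to_mat m (nat_to_real A)) \<noteq> 0"

definition aperiodic :: "nat \<Rightarrow> (nat \<Rightarrow> nat \<Rightarrow> nat) \<Rightarrow> bool" where
  "aperiodic m A \<longleftrightarrow> (\<exists>k\<ge>1. \<forall>i<m. \<forall>j<m. (to_mat m A ^\<^sub>m k) $$ (i,j) > 0)"

definition odd_block :: "nat \<Rightarrow> (nat \<Rightarrow> nat \<Rightarrow> nat) \<Rightarrow> bool" where
  "odd_block m A \<longleftrightarrow>
     (\<forall>j\<in>{1..m}. \<forall>i1\<in>{1..m}. \<forall>i2\<in>{1..m}. \<forall>i3\<in>{1..m}.
        i1 \<le> i2 \<and> i2 \<le> i3 \<and> A i1 j \<noteq> 0 \<and> A i3 j \<noteq> 0 \<longrightarrow> A i2 j \<noteq> 0) \<and>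
     (\<exists>\<phi> :: nat \<Rightarrow> nat. (\<forall>k\<in>{0..m}. \<phi> k \<in> {0..m}) \<and>
        (\<forall>i\<in>{1..m}. \<forall>j\<in>{1..m}.
           odd (A i j) \<longleftrightarrow> min (\<phi> (j-1)) (\<phi> j) < i \<and> i \<le> max (\<phi> (j-1)) (\<phi> j)))"

definition leading_eigenvalue :: "nat \<Rightarrow> (nat \<Rightarrow> nat \<Rightarrow> nat) \<Rightarrow> real" where
  "leading_eigenvalue m A = spectral_radius (to_mat m (\<lambda>i j. complex_of_nat (A i j)))"

definition perron_left_vector :: "nat \<Rightarrow> (nat \<Rightarrow> nat \<Rightarrow> nat) \<Rightarrow> real \<Rightarrow> (nat \<Rightarrow> real) \<Rightarrow> bool" where
  "perron_left_vector m A lam v \<longleftrightarrow>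
     (\<forall>i\<in>{1..m}. v i > 0) \<and> (\<Sum>i=1..m. v i) = 1 \<and>
     (\<forall>j\<in>{1..m}. (\<Sum>i=1..m. real (A i j) * v i) = lam * v j)"

definition partition_pt :: "(nat \<Rightarrow> real) \<Rightarrow> nat \<Rightarrow> real" where
  "partition_pt v i = (\<Sum>k=1..i. v k)"

definition pl_realizes :: "(real \<Rightarrow> real) \<Rightarrow> nat \<Rightarrow> (nat \<Rightarrow> nat \<Rightarrow> nat) \<Rightarrow> bool" where
  "pl_realizes h m A \<longleftrightarrow>
     (let lam = leading_eigenvalue m A in
      \<exists>v. perron_left_vector m A lam v \<and>
        (let x = partition_pt v in
          continuous_on {0..1} h \<and> h ` {0..1} \<subseteq> {0..1} \<and>
          (\<forall>j\<in>{1..m}. \<exists>(r::nat) (a::nat \<Rightarrow> real).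
             a 0 = x (j-1) \<and> a r = x j \<and> (\<forall>k<r. a k < a (Suc k)) \<and>
             (\<forall>k\<in>{1..r}.
                (\<exists>s c. (s = lam \<or> s = - lam) \<and> (\<forall>t\<in>{a (k-1)..a k}. h t = s * t + c)) \<and>
                (\<exists>i\<in>{1..m}. h ` {a (k-1)..a k} = {x (i-1)..x i})) \<and>
             (\<forall>i\<in>{1..m}. card {k\<in>{1..r}. h ` {a (k-1)..a k} = {x (i-1)..x i}} = A i j))))"

end

theory Submission
  imports Defs
begin
lemma sum_shift1: "(\<Sum>l<m. f (Suc l)) = (\<Sum>l=1..m. (f l :: 'a::comm_monoid_add))"
  using sum.atLeast1_atMost_eq[of f m] by simp

lemma spec_rad_pos_left_vec:
  fixes A :: "nat \<Rightarrow> nat \<Rightarrow> nat" and w :: "nat \<Rightarrow> real"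
  assumes m: "m \<ge> 1" and wpos: "\<forall>i\<in>{1..m}. w i > 0" and lam: "lam \<ge> 0"
    and eig: "\<forall>j\<in>{1..m}. (\<Sum>i=1..m. real (A i j) * w i) = lam * w j"
  shows "spectral_radius (to_mat m (\<lambda>i j. complex_of_nat (A i j))) = lam"
proof -
  define C where "C = to_mat m (\<lambda>i j. complex_of_nat (A i j))"
  have Cc: "C \<in> carrier_mat m m" unfolding C_def to_mat_def by simp
  have Cij: "\<And>i j. i < m \<Longrightarrow> j < m \<Longrightarrow> C $$ (i,j) = complex_of_nat (A (Suc i) (Suc j))"
    unfolding C_def to_mat_def by simp
  have m0: "m > 0" using m by simp
  have ub: "cmod mu \<le> lam" if mu: "mu \<in> spectrum C" for mu
  proof -
    from mu obtain u where ev: "eigenvector C u mu" unfolding spectrum_def eigenvalue_def by auto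
    have uc: "u \<in> carrier_vec m" and un: "u \<noteq> 0\<^sub>v m" and Cu: "C *\<^sub>v u = mu \<cdot>\<^sub>v u"
      using ev Cc unfolding eigenvector_def by auto
    have comp: "mu * u $ i = (\<Sum>l<m. complex_of_nat (A (Suc i) (Suc l)) * u $ l)" if i: "i < m" for i
    proof -
      have "mu * u $ i = (C *\<^sub>v u) $ i" using Cu uc i by simp
      also have "\<dots> = row C i \<bullet> u" using i Cc by simp
      also have "\<dots> = (\<Sum>l<m. C $$ (i,l) * u $ l)" using uc Cc i
        unfolding scalar_prod_def by (auto intro!: sum.cong simp: lessThan_atLeast0)
      also have "\<dots> = (\<Sum>l<m. complex_of_nat (A (Suc i) (Suc l)) * u $ l)"
        using i by (auto intro!: sum.cong simp: Cij)
      finally show ?thesis .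
    qed
    have ineq: "cmod mu * cmod (u $ i) \<le> (\<Sum>l<m. real (A (Suc i) (Suc l)) * cmod (u $ l))" if i: "i < m" for i
    proof -
      have "cmod mu * cmod (u $ i) = cmod (mu * u $ i)" by (simp add: norm_mult)
      also have "\<dots> = cmod (\<Sum>l<m. complex_of_nat (A (Suc i) (Suc l)) * u $ l)"
        using comp[OF i] by simp
      also have "\<dots> \<le> (\<Sum>l<m. cmod (complex_of_nat (A (Suc i) (Suc l)) * u $ l))"
        by (rule norm_sum)
      also have "\<dots> = (\<Sum>l<m. real (A (Suc i) (Suc l)) * cmod (u $ l))"
        by (simp add: norm_mult)
      finally show ?thesis .
    qed
    define S where "S = (\<Sum>i<m. w (Suc i) * cmod (u $ i))"
    have "cmod mu * S = (\<Sum>i<m. w (Suc i) * (cmod mu * cmod (u $ i)))"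
      unfolding S_def by (simp add: sum_distrib_left algebra_simps)
    also have "\<dots> \<le> (\<Sum>i<m. w (Suc i) * (\<Sum>l<m. real (A (Suc i) (Suc l)) * cmod (u $ l)))"
      by (rule sum_mono, rule mult_left_mono, rule ineq, simp, 
          use wpos in \<open>auto intro: less_imp_le\<close>)
    also have "\<dots> = (\<Sum>l<m. cmod (u $ l) * (\<Sum>i<m. real (A (Suc i) (Suc l)) * w (Suc i)))"
    proof -
      have "(\<Sum>i<m. w (Suc i) * (\<Sum>l<m. real (A (Suc i) (Suc l)) * cmod (u $ l)))
          = (\<Sum>i<m. \<Sum>l<m. cmod (u $ l) * (real (A (Suc i) (Suc l)) * w (Suc i)))"
        by (simp add: sum_distrib_left mult_ac)
      also have "\<dots> = (\<Sum>l<m. \<Sum>i<m. cmod (u $ l) * (real (A (Suc i) (Suc l)) * w (Suc i)))"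
        by (rule sum.swap)
      also have "\<dots> = (\<Sum>l<m. cmod (u $ l) * (\<Sum>i<m. real (A (Suc i) (Suc l)) * w (Suc i)))"
        by (simp add: sum_distrib_left)
      finally show ?thesis .
    qed
    also have "\<dots> = (\<Sum>l<m. cmod (u $ l) * (lam * w (Suc l)))"
    proof (rule sum.cong[OF refl])
      fix l assume l: "l \<in> {..<m}"
      have "(\<Sum>i<m. real (A (Suc i) (Suc l)) * w (Suc i)) = (\<Sum>i=1..m. real (A i (Suc l)) * w i)"
        by (rule sum_shift1)
      also have "\<dots> = lam * w (Suc l)" using eig l by auto
      finally show "cmod (u $ l) * (\<Sum>i<m. real (A (Suc i) (Suc l)) * w (Suc i)) = cmod (u $ l) * (lam * w (Suc l))" by simp
    qed
    also have "\<dots> = lam * S" unfolding S_def by (simp add: sum_distrib_left algebra_simps)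
    finally have le: "cmod mu * S \<le> lam * S" .
    obtain i0 where i0: "i0 < m" "u $ i0 \<noteq> 0"
      using un uc by (metis carrier_vecD eq_vecI index_zero_vec(1) index_zero_vec(2))
    have "S > 0" unfolding S_def
    proof (rule sum_pos2[of _ i0])
      show "finite {..<m}" by simp
      show "i0 \<in> {..<m}" using i0 by simp
      show "0 < w (Suc i0) * cmod (u $ i0)" using i0 wpos by simp
      show "\<And>i. i \<in> {..<m} \<Longrightarrow> 0 \<le> w (Suc i) * cmod (u $ i)"
      proof -
        fix i assume "i \<in> {..<m}"
        hence "w (Suc i) > 0" using wpos by auto
        thus "0 \<le> w (Suc i) * cmod (u $ i)" by simp
      qed
    qed
    with le show ?thesis by simp
  qed
  have CTc: "transpose_mat C \<in> carrier_mat m m" using Cc by simp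
  define u where "u = vec m (\<lambda>i. complex_of_real (w (Suc i)))"
  have uc: "u \<in> carrier_vec m" unfolding u_def by simp
  have un: "u \<noteq> 0\<^sub>v m"
  proof
    assume "u = 0\<^sub>v m"
    hence "u $ 0 = 0" using m0 by simp
    moreover have "w (Suc 0) > 0" using wpos m0 by auto
    ultimately show False using m0 unfolding u_def by auto
  qed
  have "transpose_mat C *\<^sub>v u = complex_of_real lam \<cdot>\<^sub>v u"
  proof (rule eq_vecI)
    show "dim_vec (transpose_mat C *\<^sub>v u) = dim_vec (complex_of_real lam \<cdot>\<^sub>v u)"
      using Cc uc by simp
    fix i assume "i < dim_vec (complex_of_real lam \<cdot>\<^sub>v u)"
    hence i: "i < m" using uc by simp
    have "(transpose_mat C *\<^sub>v u) $ i = row (transpose_mat C) i \<bullet> u" using i Cc by simp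
    also have "\<dots> = (\<Sum>l<m. C $$ (l,i) * u $ l)" using uc Cc i
      unfolding scalar_prod_def by (auto intro!: sum.cong simp: lessThan_atLeast0)
    also have "\<dots> = (\<Sum>l<m. complex_of_real (real (A (Suc l) (Suc i)) * w (Suc l)))"
      using i by (auto intro!: sum.cong simp: Cij u_def)
    also have "\<dots> = complex_of_real (\<Sum>l<m. real (A (Suc l) (Suc i)) * w (Suc l))"
      by simp
    also have "(\<Sum>l<m. real (A (Suc l) (Suc i)) * w (Suc l)) = (\<Sum>l=1..m. real (A l (Suc i)) * w l)"
      by (rule sum_shift1)
    also have "\<dots> = lam * w (Suc i)" using eig i by auto
    finally show "(transpose_mat C *\<^sub>v u) $ i = (complex_of_real lam \<cdot>\<^sub>v u) $ i"
      using i uc by (simp add: u_def)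
  qed
  hence "eigenvector (transpose_mat C) u (complex_of_real lam)"
    unfolding eigenvector_def using uc un CTc by simp
  hence "eigenvalue (transpose_mat C) (complex_of_real lam)" unfolding eigenvalue_def by auto
  hence "eigenvalue C (complex_of_real lam)"
    unfolding eigenvalue_root_char_poly[OF CTc] eigenvalue_root_char_poly[OF Cc]
      char_poly_transpose_mat[OF Cc] .
  hence "lam \<in> cmod ` spectrum C" using lam unfolding spectrum_def
    by (metis abs_of_nonneg image_eqI mem_Collect_eq norm_of_real)
  hence lb: "lam \<le> spectral_radius C" by (rule spectral_radius_mem_max(2)[OF Cc m0])
  have "spectral_radius C \<le> lam" using spectral_radius_mem_max(1)[OF Cc m0] ub by auto
  with lb show ?thesis unfolding C_def by simp
qed

lemma telescope: "(\<Sum>q=1..(p::nat). (f q - f (q - 1))) = f p - (f 0 :: real)"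
  by (induction p) (auto simp: sum.atLeast_Suc_atMost atLeastAtMostSuc_conv)

locale pdata =
  fixes n :: nat and M :: "nat \<Rightarrow> nat \<Rightarrow> nat" and h :: "real \<Rightarrow> real" and lam :: real
    and v :: "nat \<Rightarrow> real" and R :: "nat \<Rightarrow> nat" and a :: "nat \<Rightarrow> nat \<Rightarrow> real"
    and S :: "nat \<Rightarrow> nat \<Rightarrow> real" and C :: "nat \<Rightarrow> nat \<Rightarrow> real" and T :: "nat \<Rightarrow> nat \<Rightarrow> nat"
  assumes lamnn: "lam \<ge> 0" and pv: "perron_left_vector n M lam v"
  and a0: "\<And>j. j \<in> {1..n} \<Longrightarrow> a j 0 = partition_pt v (j-1)"
  and ar: "\<And>j. j \<in> {1..n} \<Longrightarrow> a j (R j) = partition_pt v j"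
  and amono: "\<And>j k. j \<in> {1..n} \<Longrightarrow> k < R j \<Longrightarrow> a j k < a j (Suc k)"
  and Sv: "\<And>j k. j \<in> {1..n} \<Longrightarrow> k \<in> {1..R j} \<Longrightarrow> S j k = lam \<or> S j k = - lam"
  and hC: "\<And>j k t. j \<in> {1..n} \<Longrightarrow> k \<in> {1..R j} \<Longrightarrow> t \<in> {a j (k-1)..a j k} \<Longrightarrow> h t = S j k * t + C j k"
  and Tr: "\<And>j k. j \<in> {1..n} \<Longrightarrow> k \<in> {1..R j} \<Longrightarrow> T j k \<in> {1..n}"
  and Ti: "\<And>j k. j \<in> {1..n} \<Longrightarrow> k \<in> {1..R j} \<Longrightarrow>
             h ` {a j (k-1)..a j k} = {partition_pt v (T j k - 1)..partition_pt v (T j k)}"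
  and cardM: "\<And>j i. j \<in> {1..n} \<Longrightarrow> i \<in> {1..n} \<Longrightarrow>
     card {k\<in>{1..R j}. h ` {a j (k-1)..a j k} = {partition_pt v (i-1)..partition_pt v i}} = M i j"
begin

abbreviation "x \<equiv> partition_pt v"

lemma vpos: "i \<in> {1..n} \<Longrightarrow> v i > 0" using pv unfolding perron_left_vector_def by auto

lemma n1: "n \<ge> 1"
proof (rule ccontr)
  assume "\<not> n \<ge> 1" hence "n = 0" by simp
  thus False using pv unfolding perron_left_vector_def by simp
qed

lemma x0: "x 0 = 0" unfolding partition_pt_def by simp
lemma xn: "x n = 1" using pv unfolding perron_left_vector_def partition_pt_def by simp
lemma xSuc: "x (Suc i) = x i + v (Suc i)" unfolding partition_pt_def by (simp add: sum.atLeast_Suc_atMost atLeastAtMostSuc_conv)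
lemma xdiff: "i \<ge> 1 \<Longrightarrow> x i - x (i - 1) = v i" using xSuc[of "i-1"] by simp

lemma xmono: "i < j \<Longrightarrow> j \<le> n \<Longrightarrow> x i < x j"
proof (induction j)
  case 0 thus ?case by simp
next
  case (Suc j)
  have "x j < x (Suc j)" using xSuc[of j] vpos[of "Suc j"] Suc.prems by simp
  thus ?case using Suc by (auto simp: less_Suc_eq)
qed

lemma xinj: "i \<le> n \<Longrightarrow> j \<le> n \<Longrightarrow> x i = x j \<Longrightarrow> i = j"
  using xmono by (metis less_irrefl linorder_neqE_nat)

lemma Iinj: "i \<in> {1..n} \<Longrightarrow> j \<in> {1..n} \<Longrightarrow> {x (i-1)..x i} = {x (j-1)..x j} \<Longrightarrow> i = j"
proof -
  assume i: "i \<in> {1..n}" and j: "j \<in> {1..n}" and e: "{x (i-1)..x i} = {x (j-1)..x j}"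
  have "x (i-1) \<le> x i" using xmono[of "i-1" i] i by force
  hence "x i = x j" using e by (simp add: Icc_eq_Icc)
  thus "i = j" using xinj i j by auto
qed

lemma R1: "j \<in> {1..n} \<Longrightarrow> R j \<ge> 1"
proof (rule ccontr)
  assume j: "j \<in> {1..n}" and "\<not> R j \<ge> 1"
  hence "R j = 0" by simp
  hence "x (j-1) = x j" using a0[OF j] ar[OF j] by simp
  thus False using xmono[of "j-1" j] j by force
qed

lemma amono2: "j \<in> {1..n} \<Longrightarrow> k < k' \<Longrightarrow> k' \<le> R j \<Longrightarrow> a j k < a j k'"
proof (induction k')
  case 0 thus ?case by simp
next
  case (Suc k')
  have "a j k' < a j (Suc k')" using amono Suc.prems by simp
  thus ?case using Suc by (auto simp: less_Suc_eq)
qed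

lemma amono3: "j \<in> {1..n} \<Longrightarrow> k \<le> k' \<Longrightarrow> k' \<le> R j \<Longrightarrow> a j k \<le> a j k'"
  using amono2 by (cases "k = k'") (auto intro: less_imp_le)

lemma lampos: "lam > 0"
proof (rule ccontr)
  assume "\<not> lam > 0" hence l0: "lam = 0" using lamnn by simp
  have j: "1 \<in> {1..n}" using n1 by simp
  have k: "1 \<in> {1..R 1}" using R1[OF j] by simp
  have lt: "a 1 0 < a 1 1" using amono[OF j, of 0] R1[OF j] by simp
  have xl: "x (T 1 1 - 1) < x (T 1 1)" using xmono[of "T 1 1 - 1" "T 1 1"] Tr[OF j k] by force
  have "h ` {a 1 0..a 1 1} \<subseteq> {C 1 1}" using hC[OF j k] Sv[OF j k] l0 by auto
  hence "{x (T 1 1 - 1)..x (T 1 1)} \<subseteq> {C 1 1}" using Ti[OF j k] by simp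
  moreover have "x (T 1 1 - 1) \<in> {x (T 1 1 - 1)..x (T 1 1)}" "x (T 1 1) \<in> {x (T 1 1 - 1)..x (T 1 1)}"
    using xl by auto
  ultimately have "x (T 1 1 - 1) = C 1 1" "x (T 1 1) = C 1 1" by blast+
  thus False using xl by simp
qed

lemma piece_eqs:
  assumes j: "j \<in> {1..n}" and k: "k \<in> {1..R j}"
  shows "S j k = lam \<Longrightarrow> lam * a j (k-1) + C j k = x (T j k - 1) \<and> lam * a j k + C j k = x (T j k)"
    and "S j k = - lam \<Longrightarrow> - lam * a j (k-1) + C j k = x (T j k) \<and> - lam * a j k + C j k = x (T j k - 1)"
proof -
  have lt: "a j (k-1) < a j k" using amono[OF j, of "k-1"] k by auto
  have im: "(\<lambda>t. S j k * t + C j k) ` {a j (k-1)..a j k} = {x (T j k - 1)..x (T j k)}"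
    using Ti[OF j k] hC[OF j k] by (metis (no_types, lifting) image_cong)
  have xle: "x (T j k - 1) \<le> x (T j k)" using xmono[of "T j k - 1" "T j k"] Tr[OF j k] by force
  {
    assume s: "S j k = lam"
    show "lam * a j (k-1) + C j k = x (T j k - 1) \<and> lam * a j k + C j k = x (T j k)"
      using im lt s xle lampos by (simp add: image_affinity_atLeastAtMost Icc_eq_Icc)
  }
  {
    assume s: "S j k = - lam"
    have neg: "\<not> 0 \<le> S j k" using s lampos by simp
    have "{S j k * a j k + C j k..S j k * a j (k-1) + C j k} = {x (T j k - 1)..x (T j k)}"
      using image_affinity_atLeastAtMost[of "S j k" "C j k" "a j (k-1)" "a j k"] im lt neg by simp
    hence "S j k * a j k + C j k = x (T j k - 1) \<and> S j k * a j (k-1) + C j k = x (T j k)"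
      using xle by (simp add: Icc_eq_Icc)
    thus "- lam * a j (k-1) + C j k = x (T j k) \<and> - lam * a j k + C j k = x (T j k - 1)"
      using s by simp
  }
qed

lemma piece_len: "j \<in> {1..n} \<Longrightarrow> k \<in> {1..R j} \<Longrightarrow> lam * (a j k - a j (k-1)) = v (T j k)"
proof -
  assume j: "j \<in> {1..n}" and k: "k \<in> {1..R j}"
  have "x (T j k) - x (T j k - 1) = v (T j k)" using xdiff Tr[OF j k] by auto
  moreover have "lam * (a j k - a j (k-1)) = x (T j k) - x (T j k - 1)"
    using Sv[OF j k] piece_eqs[OF j k] by (auto simp: algebra_simps)
  ultimately show ?thesis by simp
qed

end

context pdata begin

definition off :: "nat \<Rightarrow> nat" where "off j = (\<Sum>q=1..j. R q)"
definition mm :: nat where "mm = off n"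
definition col :: "nat \<Rightarrow> nat" where "col p = (LEAST j. p \<le> off j)"
definition y :: "nat \<Rightarrow> real" where
  "y p = (if p = 0 then 0 else a (col p) (p - off (col p - 1)))"

lemma off0[simp]: "off 0 = 0" unfolding off_def by simp
lemma offSuc: "off (Suc j) = off j + R (Suc j)"
  unfolding off_def by (simp add: sum.atLeast_Suc_atMost atLeastAtMostSuc_conv)
lemma off_step: "j \<ge> 1 \<Longrightarrow> off j = off (j-1) + R j" using offSuc[of "j-1"] by simp
lemma off_mono: "j \<le> j' \<Longrightarrow> off j \<le> off j'"
  unfolding off_def by (rule sum_mono2) auto
lemma off_lt: "j \<in> {1..n} \<Longrightarrow> off (j-1) < off j" using off_step[of j] R1[of j] by simp
lemma mm1: "mm \<ge> 1" unfolding mm_def using off_lt[of n] n1 by simp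

lemma col_unique: assumes j: "j \<in> {1..n}" and p: "off (j-1) < p" "p \<le> off j"
  shows "col p = j"
proof -
  have le: "col p \<le> j" unfolding col_def using p by (simp add: Least_le)
  have P: "p \<le> off (col p)" unfolding col_def using p by (metis LeastI)
  show ?thesis
  proof (rule ccontr)
    assume "col p \<noteq> j" hence "col p \<le> j - 1" using le by simp
    hence "off (col p) \<le> off (j-1)" by (rule off_mono)
    thus False using P p by simp
  qed
qed

lemma col_ex: assumes p: "p \<in> {1..mm}"
  shows "col p \<in> {1..n} \<and> off (col p - 1) < p \<and> p \<le> off (col p)"
proof -
  have ex: "p \<le> off n" using p mm_def by simp
  have P: "p \<le> off (col p)" unfolding col_def using ex by (metis LeastI)
  have le: "col p \<le> n" unfolding col_def using ex by (simp add: Least_le)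
  have c1: "col p \<ge> 1" proof (rule ccontr) assume "\<not> col p \<ge> 1" hence "col p = 0" by simp
    thus False using P p by simp qed
  have "off (col p - 1) < p"
  proof (rule ccontr)
    assume "\<not> off (col p - 1) < p" hence "p \<le> off (col p - 1)" by simp
    hence "col p \<le> col p - 1" unfolding col_def by (metis Least_le col_def)
    thus False using c1 by simp
  qed
  thus ?thesis using P le c1 by simp
qed

lemma yjk: assumes j: "j \<in> {1..n}" and k: "k \<le> R j" shows "y (off (j-1) + k) = a j k"
proof (cases "k \<ge> 1")
  case True
  have "col (off (j-1) + k) = j" using col_unique[OF j] True k off_step[of j] j by simp
  thus ?thesis unfolding y_def using True by simp
next
  case False
  hence k0: "k = 0" by simp
  show ?thesis
  proof (cases "j = 1")
    case True thus ?thesis using k0 a0[OF j] x0 by (simp add: y_def)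
  next
    case False
    hence j': "j - 1 \<in> {1..n}" using j by auto
    have e: "off (j-1) = off (j-1-1) + R (j-1)" using off_step[of "j-1"] j' by simp
    have ge: "R (j-1) \<ge> 1" using R1[OF j'] .
    have "col (off (j-1)) = j - 1" using col_unique[OF j', of "off (j-1)"] e ge by simp
    hence "y (off (j-1)) = a (j-1) (R (j-1))" unfolding y_def using e ge by simp
    also have "\<dots> = x (j-1)" using ar[OF j'] .
    also have "\<dots> = a j 0" using a0[OF j] by simp
    finally show ?thesis using k0 by simp
  qed
qed

lemma y_off: "j \<le> n \<Longrightarrow> y (off j) = x j"
proof (cases "j = 0")
  case True thus ?thesis using x0 by (simp add: y_def)
next
  case False
  assume "j \<le> n"
  hence j: "j \<in> {1..n}" using False by simp
  have "y (off (j-1) + R j) = a j (R j)" by (rule yjk[OF j]) simp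
  thus ?thesis using off_step[of j] j ar[OF j] by simp
qed

lemma y0: "y 0 = 0" by (simp add: y_def)
lemma ymm: "y mm = 1" using y_off[of n] xn mm_def by simp

lemma pdecomp: assumes p: "p \<in> {1..mm}"
  shows "col p \<in> {1..n} \<and> p - off (col p - 1) \<in> {1..R (col p)} \<and> p = off (col p - 1) + (p - off (col p - 1))"
  using col_ex[OF p] off_step[of "col p"] by auto

lemma y_step: assumes p: "p \<in> {1..mm}" shows "y (p-1) < y p"
proof -
  define j where "j = col p"
  define k where "k = p - off (j - 1)"
  have j: "j \<in> {1..n}" and k: "k \<in> {1..R j}" and pe: "p = off (j-1) + k"
    using pdecomp[OF p] unfolding j_def k_def by auto
  have yp: "y p = a j k" using yjk[OF j, of k] k pe by simp
  have "p - 1 = off (j-1) + (k-1)" using k pe by simp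
  moreover have "k - 1 \<le> R j" using k by (meson atLeastAtMost_iff diff_le_self le_trans)
  ultimately have "y (p-1) = a j (k-1)" using yjk[OF j, of "k-1"] by metis
  moreover have "a j (k-1) < a j k"
  proof -
    have k1: "k - 1 < R j" "Suc (k-1) = k" using k by auto
    show ?thesis using amono[OF j k1(1)] k1(2) by simp
  qed
  ultimately show ?thesis using yp by simp
qed

lemma ymono: "q < p \<Longrightarrow> p \<le> mm \<Longrightarrow> y q < y p"
proof (induction p)
  case 0 thus ?case by simp
next
  case (Suc p)
  have "y p < y (Suc p)" using y_step[of "Suc p"] Suc.prems by simp
  thus ?case using Suc by (auto simp: less_Suc_eq)
qed

lemma yinj: "q \<le> mm \<Longrightarrow> p \<le> mm \<Longrightarrow> y q = y p \<Longrightarrow> q = p"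
  using ymono by (metis less_irrefl linorder_neqE_nat)

lemma Jinj: "q \<in> {1..mm} \<Longrightarrow> p \<in> {1..mm} \<Longrightarrow> {y (q-1)..y q} = {y (p-1)..y p} \<Longrightarrow> q = p"
proof -
  assume q: "q \<in> {1..mm}" and p: "p \<in> {1..mm}" and e: "{y (q-1)..y q} = {y (p-1)..y p}"
  have "y (q-1) \<le> y q" using y_step[OF q] by simp
  hence "y q = y p" using e by (simp add: Icc_eq_Icc)
  thus "q = p" using yinj q p by auto
qed

end

lemma telescope2: assumes "a \<le> (b::nat)"
  shows "(\<Sum>q\<in>{Suc a..b}. (f q - f (q - 1))) = f b - (f a :: real)"
proof -
  have "{1..b} = {1..a} \<union> {Suc a..b}" using assms by auto
  hence "(\<Sum>q=1..b. (f q - f (q - 1))) = (\<Sum>q=1..a. (f q - f (q - 1))) + (\<Sum>q\<in>{Suc a..b}. (f q - f (q - 1)))"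
    by (simp add: sum.union_disjoint)
  thus ?thesis using telescope[of f b] telescope[of f a] by simp
qed

context pdata begin

definition ck :: "nat \<Rightarrow> nat" where "ck p = p - off (col p - 1)"
definition tg :: "nat \<Rightarrow> nat" where "tg p = T (col p) (ck p)"
definition sl :: "nat \<Rightarrow> real" where "sl p = S (col p) (ck p)"
definition cc :: "nat \<Rightarrow> real" where "cc p = C (col p) (ck p)"
definition NN :: "nat \<Rightarrow> nat \<Rightarrow> nat" where
  "NN q p = (if off (tg p - 1) < q \<and> q \<le> off (tg p) then 1 else 0)"
definition w :: "nat \<Rightarrow> real" where "w p = y p - y (p - 1)"

lemma ypiece: assumes p: "p \<in> {1..mm}"
  shows "col p \<in> {1..n}" "ck p \<in> {1..R (col p)}" "y (p-1) = a (col p) (ck p - 1)" "y p = a (col p) (ck p)"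
proof -
  define j where "j = col p"
  define k where "k = ck p"
  have j: "j \<in> {1..n}" and k: "k \<in> {1..R j}" and pe: "p = off (j-1) + k"
    using pdecomp[OF p] unfolding j_def k_def ck_def by auto
  show "col p \<in> {1..n}" "ck p \<in> {1..R (col p)}" using j k unfolding j_def k_def by auto
  have yp: "y p = a j k" using yjk[OF j, of k] k pe by simp
  have "p - 1 = off (j-1) + (k-1)" using k pe by simp
  moreover have "k - 1 \<le> R j" using k by (meson atLeastAtMost_iff diff_le_self le_trans)
  ultimately have "y (p-1) = a j (k-1)" using yjk[OF j, of "k-1"] by metis
  thus "y (p-1) = a (col p) (ck p - 1)" "y p = a (col p) (ck p)" using yp unfolding j_def k_def by auto
qed

lemma tg_range: "p \<in> {1..mm} \<Longrightarrow> tg p \<in> {1..n}"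
  unfolding tg_def using Tr ypiece by blast
lemma sl_val: "p \<in> {1..mm} \<Longrightarrow> sl p = lam \<or> sl p = - lam"
  unfolding sl_def using Sv ypiece by blast
lemma h_aff: "p \<in> {1..mm} \<Longrightarrow> t \<in> {y (p-1)..y p} \<Longrightarrow> h t = sl p * t + cc p"
  unfolding sl_def cc_def using hC ypiece by metis
lemma h_img: "p \<in> {1..mm} \<Longrightarrow> h ` {y (p-1)..y p} = {x (tg p - 1)..x (tg p)}"
  unfolding tg_def using Ti ypiece by metis
lemma ends_pos: "p \<in> {1..mm} \<Longrightarrow> sl p = lam \<Longrightarrow>
   lam * y (p-1) + cc p = x (tg p - 1) \<and> lam * y p + cc p = x (tg p)"
  unfolding sl_def cc_def tg_def using piece_eqs(1) ypiece by metis
lemma ends_neg: "p \<in> {1..mm} \<Longrightarrow> sl p = - lam \<Longrightarrow>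
   - lam * y (p-1) + cc p = x (tg p) \<and> - lam * y p + cc p = x (tg p - 1)"
  unfolding sl_def cc_def tg_def using piece_eqs(2) ypiece by metis
lemma wlen: "p \<in> {1..mm} \<Longrightarrow> lam * w p = v (tg p)"
  unfolding w_def tg_def using piece_len ypiece by metis

lemma pt_w: "partition_pt w = y"
proof
  fix p show "partition_pt w p = y p" unfolding partition_pt_def w_def
    using telescope[of y p] y0 by simp
qed

lemma wpos: "p \<in> {1..mm} \<Longrightarrow> w p > 0" unfolding w_def using y_step by simp

lemma off_le_mm: "i \<le> n \<Longrightarrow> off i \<le> mm" unfolding mm_def by (rule off_mono)

lemma block_sum: assumes i: "i \<in> {1..n}"
  shows "(\<Sum>q=1..mm. (if off (i - 1) < q \<and> q \<le> off i then f q else 0)) = (\<Sum>q\<in>{Suc (off (i-1))..off i}. (f q :: 'a::comm_monoid_add))"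
proof -
  have "(\<Sum>q=1..mm. (if off (i - 1) < q \<and> q \<le> off i then f q else 0)) = sum f {q\<in>{1..mm}. off (i - 1) < q \<and> q \<le> off i}"
    by (rule sum.inter_filter[symmetric]) simp
  also have "{q\<in>{1..mm}. off (i - 1) < q \<and> q \<le> off i} = {Suc (off (i-1))..off i}"
    using off_le_mm[of i] i by auto
  finally show ?thesis .
qed

lemma perron_N: "perron_left_vector mm NN lam w"
  unfolding perron_left_vector_def
proof (intro conjI ballI)
  show "\<And>i. i \<in> {1..mm} \<Longrightarrow> 0 < w i" by (rule wpos)
  show "(\<Sum>i=1..mm. w i) = 1" unfolding w_def using telescope[of y mm] y0 ymm by simp
  fix p assume p: "p \<in> {1..mm}"
  define i where "i = tg p"
  have i: "i \<in> {1..n}" using tg_range[OF p] i_def by simp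
  have "(\<Sum>q=1..mm. real (NN q p) * w q) = (\<Sum>q=1..mm. (if off (i - 1) < q \<and> q \<le> off i then w q else 0))"
    unfolding NN_def i_def by (rule sum.cong) auto
  also have "\<dots> = (\<Sum>q\<in>{Suc (off (i-1))..off i}. w q)" by (rule block_sum[OF i])
  also have "\<dots> = y (off i) - y (off (i-1))" unfolding w_def
    by (rule telescope2) (rule off_mono, simp)
  also have "\<dots> = x i - x (i-1)"
  proof -
    have "i - 1 \<le> n" using i by (meson atLeastAtMost_iff diff_le_self le_trans)
    thus ?thesis using y_off[of "i-1"] y_off[of i] i by simp
  qed
  also have "\<dots> = v i" using xdiff i by simp
  also have "\<dots> = lam * w p" using wlen[OF p] i_def by simp
  finally show "(\<Sum>q=1..mm. real (NN q p) * w q) = lam * w p" .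
qed

end

context pdata begin

definition g :: "nat \<Rightarrow> nat \<Rightarrow> nat" where
  "g p k = (if sl p = lam then off (tg p - 1) + k else off (tg p) - k)"
definition gg :: "nat \<Rightarrow> nat \<Rightarrow> nat" where
  "gg p k = (if sl p = lam then off (tg p - 1) + k else off (tg p) - k + 1)"
definition b :: "nat \<Rightarrow> nat \<Rightarrow> real" where
  "b p k = (y (g p k) - cc p) / sl p"

lemma sl_nz: "p \<in> {1..mm} \<Longrightarrow> sl p \<noteq> 0" using sl_val lampos by force

lemma off_tg: "p \<in> {1..mm} \<Longrightarrow> off (tg p) = off (tg p - 1) + R (tg p)"
  using off_step tg_range by force

lemma y_off_tg: "p \<in> {1..mm} \<Longrightarrow> y (off (tg p)) = x (tg p) \<and> y (off (tg p - 1)) = x (tg p - 1)"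
proof -
  assume p: "p \<in> {1..mm}"
  have "tg p \<le> n" "tg p - 1 \<le> n" using tg_range[OF p] by auto
  thus ?thesis using y_off by simp
qed

lemma sl_b: "p \<in> {1..mm} \<Longrightarrow> sl p * b p k + cc p = y (g p k)"
  unfolding b_def using sl_nz by simp

lemma b0: assumes p: "p \<in> {1..mm}" shows "b p 0 = y (p-1)"
proof (cases "sl p = lam")
  case True
  have "sl p * b p 0 + cc p = sl p * y (p-1) + cc p"
    using sl_b[OF p, of 0] ends_pos[OF p True] y_off_tg[OF p] True by (simp add: g_def)
  thus ?thesis using sl_nz[OF p] by simp
next
  case False
  hence F: "sl p = - lam" using sl_val[OF p] by auto
  have "sl p * b p 0 + cc p = sl p * y (p-1) + cc p"
    using sl_b[OF p, of 0] ends_neg[OF p F] y_off_tg[OF p] F False by (simp add: g_def)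
  thus ?thesis using sl_nz[OF p] by simp
qed

lemma bR: assumes p: "p \<in> {1..mm}" shows "b p (R (tg p)) = y p"
proof (cases "sl p = lam")
  case True
  have "sl p * b p (R (tg p)) + cc p = sl p * y p + cc p"
    using sl_b[OF p, of "R (tg p)"] ends_pos[OF p True] y_off_tg[OF p] True off_tg[OF p]
    by (simp add: g_def)
  thus ?thesis using sl_nz[OF p] by simp
next
  case False
  hence F: "sl p = - lam" using sl_val[OF p] by auto
  have "sl p * b p (R (tg p)) + cc p = sl p * y p + cc p"
    using sl_b[OF p, of "R (tg p)"] ends_neg[OF p F] y_off_tg[OF p] F False off_tg[OF p]
    by (simp add: g_def)
  thus ?thesis using sl_nz[OF p] by simp
qed

lemma bmono: assumes p: "p \<in> {1..mm}" and k: "k < R (tg p)" shows "b p k < b p (Suc k)"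
proof (cases "sl p = lam")
  case True
  have le: "off (tg p - 1) + Suc k \<le> mm" using off_tg[OF p] k off_le_mm[of "tg p"] tg_range[OF p] by simp
  have "y (off (tg p - 1) + k) < y (off (tg p - 1) + Suc k)" by (rule ymono) (use le in auto)
  thus ?thesis unfolding b_def g_def using True lampos by (simp add: divide_strict_right_mono)
next
  case False
  hence F: "sl p = - lam" using sl_val[OF p] by auto
  have le: "off (tg p) - k \<le> mm" using off_le_mm[of "tg p"] tg_range[OF p] by simp
  have "y (off (tg p) - Suc k) < y (off (tg p) - k)" by (rule ymono) (use le off_tg[OF p] k in auto)
  thus ?thesis unfolding b_def g_def using False F lampos
    by (simp add: divide_strict_right_mono_neg divide_strict_right_mono)
qed

lemma bmono2: "p \<in> {1..mm} \<Longrightarrow> k \<le> k' \<Longrightarrow> k' \<le> R (tg p) \<Longrightarrow> b p k \<le> b p k'"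
proof (induction k')
  case 0 thus ?case by simp
next
  case (Suc k')
  show ?case
  proof (cases "k = Suc k'")
    case True thus ?thesis by simp
  next
    case False
    hence "b p k \<le> b p k'" using Suc by simp
    also have "\<dots> < b p (Suc k')" using bmono Suc.prems by simp
    finally show ?thesis by simp
  qed
qed

lemma gg_range: assumes p: "p \<in> {1..mm}" and k: "k \<in> {1..R (tg p)}"
  shows "off (tg p - 1) < gg p k \<and> gg p k \<le> off (tg p)"
  using off_tg[OF p] k unfolding gg_def by auto

lemma gg_mm: assumes p: "p \<in> {1..mm}" and k: "k \<in> {1..R (tg p)}" shows "gg p k \<in> {1..mm}"
  using gg_range[OF p k] off_le_mm[of "tg p"] tg_range[OF p] by auto

lemma sub_aff: assumes p: "p \<in> {1..mm}" and k: "k \<in> {1..R (tg p)}" and t: "t \<in> {b p (k-1)..b p k}"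
  shows "h t = sl p * t + cc p"
proof -
  have "b p 0 \<le> b p (k-1)" "b p k \<le> b p (R (tg p))" using bmono2[OF p] k by auto
  hence "t \<in> {y (p-1)..y p}" using t b0[OF p] bR[OF p] by auto
  thus ?thesis by (rule h_aff[OF p])
qed

lemma sub_img: assumes p: "p \<in> {1..mm}" and k: "k \<in> {1..R (tg p)}"
  shows "h ` {b p (k-1)..b p k} = {y (gg p k - 1)..y (gg p k)}"
proof -
  have k1: "k - 1 < R (tg p)" "Suc (k-1) = k" using k by auto
  have lt: "b p (k-1) < b p k" using bmono[OF p k1(1)] k1(2) by simp
  have "h ` {b p (k-1)..b p k} = (\<lambda>t. sl p * t + cc p) ` {b p (k-1)..b p k}"
    using sub_aff[OF p k] by (rule image_cong[OF refl])
  also have "(\<lambda>t. sl p * t + cc p) ` {b p (k-1)..b p k} = {y (gg p k - 1)..y (gg p k)}"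
  proof (cases "sl p = lam")
    case True
    have "(\<lambda>t. sl p * t + cc p) ` {b p (k-1)..b p k} = {sl p * b p (k-1) + cc p..sl p * b p k + cc p}"
      using image_affinity_atLeastAtMost[of "sl p" "cc p" "b p (k-1)" "b p k"] lt True lampos by simp
    also have "\<dots> = {y (g p (k-1))..y (g p k)}" using sl_b[OF p] by simp
    also have "\<dots> = {y (gg p k - 1)..y (gg p k)}"
      using True k unfolding g_def gg_def by auto
    finally show ?thesis .
  next
    case False
    have "(\<lambda>t. sl p * t + cc p) ` {b p (k-1)..b p k} = {sl p * b p k + cc p..sl p * b p (k-1) + cc p}"
      using image_affinity_atLeastAtMost[of "sl p" "cc p" "b p (k-1)" "b p k"] lt False sl_val[OF p] lampos
      by auto
    also have "\<dots> = {y (g p k)..y (g p (k-1))}" using sl_b[OF p] by simp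
    also have "\<dots> = {y (gg p k - 1)..y (gg p k)}"
    proof -
      have "g p (k-1) = gg p k \<and> g p k = gg p k - 1" using False k off_tg[OF p] unfolding g_def gg_def by auto
      thus ?thesis by simp
    qed
    finally show ?thesis .
  qed
  finally show ?thesis .
qed

lemma sub_card: assumes p: "p \<in> {1..mm}" and q: "q \<in> {1..mm}"
  shows "card {k\<in>{1..R (tg p)}. h ` {b p (k-1)..b p k} = {y (q-1)..y q}} = NN q p"
proof -
  have "{k\<in>{1..R (tg p)}. h ` {b p (k-1)..b p k} = {y (q-1)..y q}} = {k\<in>{1..R (tg p)}. gg p k = q}"
    using sub_img[OF p] Jinj[OF gg_mm[OF p] q] by auto
  also have "\<dots> = (if off (tg p - 1) < q \<and> q \<le> off (tg p) then
       {if sl p = lam then q - off (tg p - 1) else off (tg p) + 1 - q} else {})"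
    using gg_range[OF p] off_tg[OF p] unfolding gg_def by (auto split: if_splits)
  finally show ?thesis unfolding NN_def by simp
qed

end

fun pw :: "nat \<Rightarrow> (nat \<Rightarrow> nat \<Rightarrow> nat) \<Rightarrow> nat \<Rightarrow> nat \<Rightarrow> nat \<Rightarrow> nat" where
  "pw m A 0 i j = (if i = j then 1 else 0)"
| "pw m A (Suc t) i j = (\<Sum>l=1..m. pw m A t i l * A l j)"

lemma pw_mat: "i < m \<Longrightarrow> j < m \<Longrightarrow> (to_mat m A ^\<^sub>m t) $$ (i,j) = pw m A t (Suc i) (Suc j)"
proof (induction t arbitrary: i j)
  case 0 thus ?case by (simp add: to_mat_def)
next
  case (Suc t)
  have Ac: "to_mat m A \<in> carrier_mat m m" unfolding to_mat_def by simp
  have Pc: "to_mat m A ^\<^sub>m t \<in> carrier_mat m m" using Ac by simp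
  have "(to_mat m A ^\<^sub>m Suc t) $$ (i,j) = (to_mat m A ^\<^sub>m t * to_mat m A) $$ (i,j)" by simp
  also have "\<dots> = row (to_mat m A ^\<^sub>m t) i \<bullet> col (to_mat m A) j" using Suc.prems Ac Pc by simp
  also have "\<dots> = (\<Sum>l<m. (to_mat m A ^\<^sub>m t) $$ (i,l) * (to_mat m A) $$ (l,j))"
    using Suc.prems Ac Pc unfolding scalar_prod_def by (auto intro!: sum.cong simp: lessThan_atLeast0)
  also have "\<dots> = (\<Sum>l<m. pw m A t (Suc i) (Suc l) * A (Suc l) (Suc j))"
    using Suc by (auto intro!: sum.cong simp: to_mat_def)
  also have "\<dots> = (\<Sum>l=1..m. pw m A t (Suc i) l * A l (Suc j))" by (rule sum_shift1)
  finally show ?case by simp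
qed

lemma aperiodic_pw: "aperiodic m A \<longleftrightarrow> (\<exists>k\<ge>1. \<forall>i\<in>{1..m}. \<forall>j\<in>{1..m}. pw m A k i j > 0)"
proof -
  have "(\<forall>i<m. \<forall>j<m. (to_mat m A ^\<^sub>m k) $$ (i,j) > 0) \<longleftrightarrow> (\<forall>i\<in>{1..m}. \<forall>j\<in>{1..m}. pw m A k i j > 0)" for k
  proof
    assume H: "\<forall>i<m. \<forall>j<m. (to_mat m A ^\<^sub>m k) $$ (i,j) > 0"
    show "\<forall>i\<in>{1..m}. \<forall>j\<in>{1..m}. pw m A k i j > 0"
    proof (intro ballI)
      fix i j assume i: "i \<in> {1..m}" and j: "j \<in> {1..m}"
      have "(to_mat m A ^\<^sub>m k) $$ (i-1,j-1) > 0" using H i j by auto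
      moreover have "i - 1 < m" "j - 1 < m" "Suc (i-1) = i" "Suc (j-1) = j" using i j by auto
      ultimately show "pw m A k i j > 0" using pw_mat[of "i-1" m "j-1" A k] by simp
    qed
  next
    assume H: "\<forall>i\<in>{1..m}. \<forall>j\<in>{1..m}. pw m A k i j > 0"
    show "\<forall>i<m. \<forall>j<m. (to_mat m A ^\<^sub>m k) $$ (i,j) > 0"
    proof (intro allI impI)
      fix i j assume i: "i < m" and j: "j < m"
      have "pw m A k (Suc i) (Suc j) > 0" using H i j by auto
      thus "(to_mat m A ^\<^sub>m k) $$ (i,j) > 0" using pw_mat[OF i j] by simp
    qed
  qed
  thus ?thesis unfolding aperiodic_def by simp
qed

lemma sum_group_card:
  assumes fin: "finite K" and img: "Tf ` K \<subseteq> U" and finU: "finite U"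
  shows "(\<Sum>k\<in>K. f (Tf k)) = (\<Sum>u\<in>U. f u * card {k\<in>K. Tf k = u})"
proof -
  have "(\<Sum>k\<in>K. f (Tf k)) = (\<Sum>k\<in>K. \<Sum>u\<in>U. (if Tf k = u then f u else 0))"
  proof (rule sum.cong[OF refl])
    fix k assume "k \<in> K"
    hence "Tf k \<in> U" using img by auto
    thus "f (Tf k) = (\<Sum>u\<in>U. (if Tf k = u then f u else 0))"
      using finU by (simp add: sum.delta)
  qed
  also have "\<dots> = (\<Sum>u\<in>U. \<Sum>k\<in>K. (if Tf k = u then f u else 0))" by (rule sum.swap)
  also have "\<dots> = (\<Sum>u\<in>U. f u * card {k\<in>K. Tf k = u})"
  proof (rule sum.cong[OF refl])
    fix u
    have "(\<Sum>k\<in>K. (if Tf k = u then f u else 0)) = (\<Sum>k\<in>{k\<in>K. Tf k = u}. f u)"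
      by (rule sum.inter_filter[symmetric, OF fin])
    thus "(\<Sum>k\<in>K. (if Tf k = u then f u else 0)) = f u * card {k\<in>K. Tf k = u}" by (simp add: mult.commute)
  qed
  finally show ?thesis .
qed

context pdata begin

lemma NN_col: "q \<in> {1..mm} \<Longrightarrow> p \<in> {1..mm} \<Longrightarrow> NN q p = (if col q = tg p then 1 else 0)"
proof -
  assume q: "q \<in> {1..mm}" and p: "p \<in> {1..mm}"
  have "(off (tg p - 1) < q \<and> q \<le> off (tg p)) \<longleftrightarrow> col q = tg p"
    using col_unique[OF tg_range[OF p]] col_ex[OF q] by auto
  thus ?thesis unfolding NN_def by simp
qed

lemma T_card: "i \<in> {1..n} \<Longrightarrow> u \<in> {1..n} \<Longrightarrow> card {k\<in>{1..R i}. T i k = u} = M u i"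
proof -
  assume i: "i \<in> {1..n}" and u: "u \<in> {1..n}"
  have "{k\<in>{1..R i}. T i k = u} = {k\<in>{1..R i}. h ` {a i (k-1)..a i k} = {x (u-1)..x u}}"
    using Ti[OF i] Iinj[OF Tr[OF i] u] by auto
  thus ?thesis using cardM[OF i u] by simp
qed

lemma tg_block: "i \<in> {1..n} \<Longrightarrow> k \<in> {1..R i} \<Longrightarrow> tg (off (i-1) + k) = T i k \<and> off (i-1) + k \<in> {1..mm}"
proof -
  assume i: "i \<in> {1..n}" and k: "k \<in> {1..R i}"
  have c: "col (off (i-1) + k) = i" using col_unique[OF i] k off_step[of i] i by simp
  have "off (i-1) + k \<le> mm" using off_step[of i] i k off_le_mm[of i] by simp
  thus ?thesis using c k unfolding tg_def ck_def by simp
qed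

lemma pw_N: "q \<in> {1..mm} \<Longrightarrow> p \<in> {1..mm} \<Longrightarrow> pw mm NN (Suc t) q p = pw n M t (col q) (tg p)"
proof (induction t arbitrary: p)
  case 0
  have "pw mm NN (Suc 0) q p = (\<Sum>l=1..mm. pw mm NN 0 q l * NN l p)"
    by (simp only: pw.simps)
  also have "\<dots> = (\<Sum>l=1..mm. (if l = q then NN l p else 0))"
    by (rule sum.cong) auto
  also have "\<dots> = NN q p" using 0 by (simp add: sum.delta[of "{1..mm}" q])
  finally show ?case using NN_col[OF 0(1,2)] by simp
next
  case (Suc t)
  define i where "i = tg p"
  have i: "i \<in> {1..n}" using tg_range[OF Suc.prems(2)] i_def by simp
  have "pw mm NN (Suc (Suc t)) q p = (\<Sum>l=1..mm. pw mm NN (Suc t) q l * NN l p)" by simp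
  also have "\<dots> = (\<Sum>l=1..mm. (if off (i - 1) < l \<and> l \<le> off i then pw n M t (col q) (tg l) else 0))"
  proof (rule sum.cong[OF refl])
    fix l assume l: "l \<in> {1..mm}"
    have e1: "NN l p = (if off (i - 1) < l \<and> l \<le> off i then 1 else 0)" by (simp add: NN_def i_def)
    have e2: "pw mm NN (Suc t) q l = pw n M t (col q) (tg l)" by (rule Suc.IH[OF Suc.prems(1) l])
    show "pw mm NN (Suc t) q l * NN l p = (if off (i - 1) < l \<and> l \<le> off i then pw n M t (col q) (tg l) else 0)"
      by (simp only: e1 e2) simp
  qed
  also have "\<dots> = (\<Sum>l\<in>{Suc (off (i-1))..off i}. pw n M t (col q) (tg l))" by (rule block_sum[OF i])
  also have "{Suc (off (i-1))..off i} = (\<lambda>k. off (i-1) + k) ` {1..R i}"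
  proof -
    have "off i = off (i-1) + R i" using off_step[of i] i by simp
    thus ?thesis by (auto simp: image_iff intro!: bexI[of _ "_ - off (i-1)"])
  qed
  also have "(\<Sum>l\<in>(\<lambda>k. off (i-1) + k) ` {1..R i}. pw n M t (col q) (tg l)) =
     (\<Sum>k\<in>{1..R i}. pw n M t (col q) (tg (off (i-1) + k)))"
    by (rule sum.reindex_cong[of "\<lambda>k. off (i-1) + k"]) (auto simp: inj_on_def)
  also have "\<dots> = (\<Sum>k\<in>{1..R i}. pw n M t (col q) (T i k))"
    using tg_block[OF i] by (auto intro!: sum.cong)
  also have "\<dots> = (\<Sum>u\<in>{1..n}. pw n M t (col q) u * card {k\<in>{1..R i}. T i k = u})"
    by (rule sum_group_card) (use Tr[OF i] in auto)
  also have "\<dots> = (\<Sum>u\<in>{1..n}. pw n M t (col q) u * M u i)"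
    using T_card[OF i] by (auto intro!: sum.cong)
  also have "\<dots> = pw n M (Suc t) (col q) i" by simp
  finally show ?case unfolding i_def .
qed

lemma aperiodic_N: assumes ap: "aperiodic n M" shows "aperiodic mm NN"
proof -
  obtain k where k: "k \<ge> 1" and pos: "\<forall>i\<in>{1..n}. \<forall>j\<in>{1..n}. pw n M k i j > 0"
    using ap unfolding aperiodic_pw by auto
  have "\<forall>q\<in>{1..mm}. \<forall>p\<in>{1..mm}. pw mm NN (Suc k) q p > 0"
    using pw_N pos col_ex tg_range by simp
  thus ?thesis unfolding aperiodic_pw by (intro exI[of _ "Suc k"]) simp
qed

lemma NN01: "NN q p \<in> {0,1}" unfolding NN_def by simp

definition E :: "nat \<Rightarrow> nat" where
  "E p = (if p = 0 then (if sl 1 = lam then tg 1 - 1 else tg 1) else (if sl p = lam then tg p else tg p - 1))"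

lemma one_mm: "1 \<in> {1..mm}" using mm1 by simp

lemma left_val: "p \<in> {1..mm} \<Longrightarrow> h (y (p-1)) = x (if sl p = lam then tg p - 1 else tg p)"
proof -
  assume p: "p \<in> {1..mm}"
  have "h (y (p-1)) = sl p * y (p-1) + cc p" using h_aff[OF p] y_step[OF p] by simp
  thus ?thesis using ends_pos[OF p] ends_neg[OF p] sl_val[OF p] lampos by auto
qed

lemma right_val: "p \<in> {1..mm} \<Longrightarrow> h (y p) = x (if sl p = lam then tg p else tg p - 1)"
proof -
  assume p: "p \<in> {1..mm}"
  have "h (y p) = sl p * y p + cc p" using h_aff[OF p] y_step[OF p] by simp
  thus ?thesis using ends_pos[OF p] ends_neg[OF p] sl_val[OF p] lampos by auto
qed

lemma E_le: "p \<le> mm \<Longrightarrow> E p \<le> n"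
proof -
  assume p: "p \<le> mm"
  show ?thesis
  proof (cases "p = 0")
    case True
    have "tg 1 \<le> n" using tg_range[OF one_mm] by simp
    thus ?thesis unfolding E_def using True by arith
  next
    case False
    hence "tg p \<le> n" using tg_range[of p] p by simp
    thus ?thesis unfolding E_def using False by arith
  qed
qed

lemma E_left: assumes p: "p \<in> {1..mm}" shows "E (p-1) = (if sl p = lam then tg p - 1 else tg p)"
proof (cases "p = 1")
  case True thus ?thesis unfolding E_def by simp
next
  case False
  hence p': "p - 1 \<in> {1..mm}" using p by auto
  have "x (E (p-1)) = h (y (p-1))" using right_val[OF p'] p' unfolding E_def by auto
  also have "\<dots> = x (if sl p = lam then tg p - 1 else tg p)" by (rule left_val[OF p])
  finally show ?thesis
    using xinj E_le[of "p-1"] tg_range[OF p] p by (auto split: if_splits)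
qed

lemma odd_block_N: "odd_block mm NN"
  unfolding odd_block_def
proof (intro conjI)
  show "\<forall>j\<in>{1..mm}. \<forall>i1\<in>{1..mm}. \<forall>i2\<in>{1..mm}. \<forall>i3\<in>{1..mm}.
        i1 \<le> i2 \<and> i2 \<le> i3 \<and> NN i1 j \<noteq> 0 \<and> NN i3 j \<noteq> 0 \<longrightarrow> NN i2 j \<noteq> 0"
    unfolding NN_def by auto
  show "\<exists>\<phi>. (\<forall>k\<in>{0..mm}. \<phi> k \<in> {0..mm}) \<and>
        (\<forall>i\<in>{1..mm}. \<forall>j\<in>{1..mm}.
           odd (NN i j) \<longleftrightarrow> min (\<phi> (j-1)) (\<phi> j) < i \<and> i \<le> max (\<phi> (j-1)) (\<phi> j))"
  proof (intro exI[of _ "\<lambda>p. off (E p)"] conjI ballI)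
    fix k assume "k \<in> {0..mm}"
    thus "off (E k) \<in> {0..mm}" using E_le off_le_mm by auto
  next
    fix i j assume i: "i \<in> {1..mm}" and j: "j \<in> {1..mm}"
    have mono: "off (tg j - 1) \<le> off (tg j)" by (rule off_mono) simp
    have "min (off (E (j-1))) (off (E j)) = off (tg j - 1) \<and> max (off (E (j-1))) (off (E j)) = off (tg j)"
      using E_left[OF j] mono j unfolding E_def by auto
    thus "odd (NN i j) \<longleftrightarrow> min (off (E (j-1))) (off (E j)) < i \<and> i \<le> max (off (E (j-1))) (off (E j))"
      unfolding NN_def by auto
  qed
qed

end

context pdata begin

lemma lead_N: "leading_eigenvalue mm NN = lam"
  unfolding leading_eigenvalue_def
  by (rule spec_rad_pos_left_vec[OF mm1]) (use perron_N lamnn in \<open>auto simp: perron_left_vector_def\<close>)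

lemma realize_N:
  assumes cont: "continuous_on {0..1} h" and rng: "h ` {0..1} \<subseteq> {0..1}"
  shows "pl_realizes h mm NN"
  unfolding pl_realizes_def Let_def lead_N
proof (intro exI[of _ w] conjI ballI, simp_all only: pt_w)
  show "perron_left_vector mm NN lam w" by (rule perron_N)
  show "continuous_on {0..1} h" by (rule cont)
  show "h ` {0..1} \<subseteq> {0..1}" by (rule rng)
  fix p assume p: "p \<in> {1..mm}"
  show "\<exists>r a. a 0 = y (p - 1) \<and> a r = y p \<and> (\<forall>k<r. a k < a (Suc k)) \<and>
          (\<forall>k\<in>{1..r}. (\<exists>s c. (s = lam \<or> s = - lam) \<and> (\<forall>t\<in>{a (k - 1)..a k}. h t = s * t + c)) \<and>
                 (\<exists>i\<in>{1..mm}. h ` {a (k - 1)..a k} = {y (i - 1)..y i})) \<and>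
          (\<forall>i\<in>{1..mm}. card {k \<in> {1..r}. h ` {a (k - 1)..a k} = {y (i - 1)..y i}} = NN i p)"
  proof (intro exI[of _ "R (tg p)"] exI[of _ "b p"] conjI ballI allI impI)
    show "b p 0 = y (p - 1)" by (rule b0[OF p])
    show "b p (R (tg p)) = y p" by (rule bR[OF p])
    show "\<And>k. k < R (tg p) \<Longrightarrow> b p k < b p (Suc k)" by (rule bmono[OF p])
    fix k assume k: "k \<in> {1..R (tg p)}"
    show "\<exists>s c. (s = lam \<or> s = - lam) \<and> (\<forall>t\<in>{b p (k - 1)..b p k}. h t = s * t + c)"
      using sl_val[OF p] sub_aff[OF p k] by blast
    show "\<exists>i\<in>{1..mm}. h ` {b p (k - 1)..b p k} = {y (i - 1)..y i}"
      using gg_mm[OF p k] sub_img[OF p k] by blast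
  next
    fix i assume i: "i \<in> {1..mm}"
    show "card {k \<in> {1..R (tg p)}. h ` {b p (k - 1)..b p k} = {y (i - 1)..y i}} = NN i p"
      by (rule sub_card[OF p i])
  qed
qed

end

theorem theorem2:
  fixes n :: nat and M :: "nat \<Rightarrow> nat \<Rightarrow> nat" and h :: "real \<Rightarrow> real"
  assumes "nonsingular n M" and "aperiodic n M" and "odd_block n M"
    and "pl_realizes h n M"
  shows "\<exists>(m::nat) (N :: nat \<Rightarrow> nat \<Rightarrow> nat).
           aperiodic m N \<and> odd_block m N \<and> (\<forall>i\<in>{1..m}. \<forall>j\<in>{1..m}. N i j \<in> {0,1}) \<and>
           pl_realizes h m N \<and> leading_eigenvalue m N = leading_eigenvalue n M"
proof -
  define lam where "lam = leading_eigenvalue n M"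
  define PP where "PP v j (r::nat) (a::nat \<Rightarrow> real) \<longleftrightarrow>
             a 0 = partition_pt v (j-1) \<and> a r = partition_pt v j \<and> (\<forall>k<r. a k < a (Suc k)) \<and>
             (\<forall>k\<in>{1..r}.
                (\<exists>s c. (s = lam \<or> s = - lam) \<and> (\<forall>t\<in>{a (k-1)..a k}. h t = s * t + c)) \<and>
                (\<exists>i\<in>{1..n}. h ` {a (k-1)..a k} = {partition_pt v (i-1)..partition_pt v i})) \<and>
             (\<forall>i\<in>{1..n}. card {k\<in>{1..r}. h ` {a (k-1)..a k} = {partition_pt v (i-1)..partition_pt v i}} = M i j)"
    for v j r a
  have "\<exists>v. perron_left_vector n M lam v \<and> (continuous_on {0..1} h \<and> h ` {0..1} \<subseteq> {0..1} \<and>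
      (\<forall>j\<in>{1..n}. \<exists>r a. PP v j r a))"
    using assms(4) unfolding pl_realizes_def Let_def lam_def[symmetric] PP_def .
  then obtain v where pv: "perron_left_vector n M lam v"
    and cont: "continuous_on {0..1} h" and rng: "h ` {0..1} \<subseteq> {0..1}"
    and cols: "\<forall>j\<in>{1..n}. \<exists>r a. PP v j r a" by blast
  have "\<forall>j\<in>{1..n}. \<exists>ra. PP v j (fst ra) (snd ra)"
  proof
    fix j assume "j \<in> {1..n}"
    then obtain r a where "PP v j r a" using cols by blast
    thus "\<exists>ra. PP v j (fst ra) (snd ra)" by (intro exI[of _ "(r,a)"]) simp
  qed
  then obtain RA where RA: "\<forall>j\<in>{1..n}. PP v j (fst (RA j)) (snd (RA j))"
    by (rule bchoice[elim_format]) blast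
  define R where "R j = fst (RA j)" for j
  define a where "a j = snd (RA j)" for j
  have RA': "\<And>j. j \<in> {1..n} \<Longrightarrow> PP v j (R j) (a j)" using RA unfolding R_def a_def by blast
  define QQ where "QQ jk z \<longleftrightarrow> (fst z = lam \<or> fst z = - lam) \<and> (\<forall>t\<in>{a (fst jk) (snd jk - 1)..a (fst jk) (snd jk)}. h t = fst z * t + fst (snd z)) \<and>
          snd (snd z) \<in> {1..n} \<and> h ` {a (fst jk) (snd jk - 1)..a (fst jk) (snd jk)} = {partition_pt v (snd (snd z) - 1)..partition_pt v (snd (snd z))}"
    for jk :: "nat \<times> nat" and z :: "real \<times> real \<times> nat"
  have "\<forall>jk\<in>Sigma {1..n} (\<lambda>j. {1..R j}). \<exists>z. QQ jk z"
  proof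
    fix jk assume jk: "jk \<in> Sigma {1..n} (\<lambda>j. {1..R j})"
    then obtain j k where jk': "jk = (j,k)" "j \<in> {1..n}" "k \<in> {1..R j}" by auto
    have "PP v j (R j) (a j)" using RA' jk' by blast
    hence "(\<exists>s c. (s = lam \<or> s = - lam) \<and> (\<forall>t\<in>{a j (k-1)..a j k}. h t = s * t + c)) \<and>
                (\<exists>i\<in>{1..n}. h ` {a j (k-1)..a j k} = {partition_pt v (i-1)..partition_pt v i})"
      using jk' unfolding PP_def by blast
    then obtain s c i where "(s = lam \<or> s = - lam)" "\<forall>t\<in>{a j (k-1)..a j k}. h t = s * t + c"
      "i \<in> {1..n}" "h ` {a j (k-1)..a j k} = {partition_pt v (i-1)..partition_pt v i}"
      by blast
    thus "\<exists>z. QQ jk z"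
      using jk' unfolding QQ_def by (intro exI[of _ "(s,c,i)"]) simp
  qed
  then obtain F where F: "\<forall>jk\<in>Sigma {1..n} (\<lambda>j. {1..R j}). QQ jk (F jk)"
    by (rule bchoice[elim_format]) blast
  have F': "\<And>j k. j \<in> {1..n} \<Longrightarrow> k \<in> {1..R j} \<Longrightarrow> QQ (j,k) (F (j,k))" using F by blast
  define S where "S j k = fst (F (j,k))" for j k
  define C where "C j k = fst (snd (F (j,k)))" for j k
  define T where "T j k = snd (snd (F (j,k)))" for j k
  have n0: "n > 0" using pv unfolding perron_left_vector_def by (cases n) auto
  have lamnn: "lam \<ge> 0"
  proof -
    have Mc: "to_mat n (\<lambda>i j. complex_of_nat (M i j)) \<in> carrier_mat n n" unfolding to_mat_def by simp
    show ?thesis unfolding lam_def leading_eigenvalue_def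
      using spectral_radius_mem_max(1)[OF Mc n0] by auto
  qed
  interpret pdata n M h lam v R a S C T
  proof
    show "lam \<ge> 0" by (rule lamnn)
    show "perron_left_vector n M lam v" by (rule pv)
    show "\<And>j. j \<in> {1..n} \<Longrightarrow> a j 0 = partition_pt v (j-1)" using RA' unfolding PP_def by blast
    show "\<And>j. j \<in> {1..n} \<Longrightarrow> a j (R j) = partition_pt v j" using RA' unfolding PP_def by blast
    show "\<And>j k. j \<in> {1..n} \<Longrightarrow> k < R j \<Longrightarrow> a j k < a j (Suc k)" using RA' unfolding PP_def by blast
    show "S j k = lam \<or> S j k = - lam" if j: "j \<in> {1..n}" and k: "k \<in> {1..R j}" for j k
    proof -
      have q: "QQ (j,k) (F (j,k))" by (rule F'[OF j k])
      thus ?thesis unfolding QQ_def S_def fst_conv snd_conv by (elim conjE) assumption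
    qed
    show "h t = S j k * t + C j k" if j: "j \<in> {1..n}" and k: "k \<in> {1..R j}" and t: "t \<in> {a j (k-1)..a j k}" for j k t
    proof -
      have q: "QQ (j,k) (F (j,k))" by (rule F'[OF j k])
      hence "\<forall>t\<in>{a j (k-1)..a j k}. h t = fst (F (j,k)) * t + fst (snd (F (j,k)))"
        unfolding QQ_def fst_conv snd_conv by (elim conjE) assumption
      thus ?thesis using t unfolding S_def C_def by (rule bspec)
    qed
    show "T j k \<in> {1..n}" if j: "j \<in> {1..n}" and k: "k \<in> {1..R j}" for j k
    proof -
      have q: "QQ (j,k) (F (j,k))" by (rule F'[OF j k])
      thus ?thesis unfolding QQ_def T_def fst_conv snd_conv by (elim conjE) assumption
    qed
    show "h ` {a j (k-1)..a j k} = {partition_pt v (T j k - 1)..partition_pt v (T j k)}"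
      if j: "j \<in> {1..n}" and k: "k \<in> {1..R j}" for j k
    proof -
      have q: "QQ (j,k) (F (j,k))" by (rule F'[OF j k])
      thus ?thesis unfolding QQ_def T_def fst_conv snd_conv by (elim conjE) assumption
    qed
    show "\<And>j i. j \<in> {1..n} \<Longrightarrow> i \<in> {1..n} \<Longrightarrow>
     card {k\<in>{1..R j}. h ` {a j (k-1)..a j k} = {partition_pt v (i-1)..partition_pt v i}} = M i j"
      using RA' unfolding PP_def by blast
  qed
  have "aperiodic mm NN" by (rule aperiodic_N[OF assms(2)])
  moreover have "odd_block mm NN" by (rule odd_block_N)
  moreover have "\<forall>i\<in>{1..mm}. \<forall>j\<in>{1..mm}. NN i j \<in> {0,1}" using NN01 by blast
  moreover have "pl_realizes h mm NN" by (rule realize_N[OF cont rng])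
  moreover have "leading_eigenvalue mm NN = leading_eigenvalue n M" using lead_N lam_def by simp
  ultimately show ?thesis by blast
qed

end
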